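(* Let $(\mathbf{L},\mathbf{R})\in\mathcal{P}_{\mathsf N}$ be balanced and suppose the associated inequality $\sum_{n=1}^{m_L}\mathsf S(X_n)\ge\sum_{n=1}^{m_R}\mathsf S(Y_n)$ is a holographic entropy inequality. Then $(\mathbf{L},\mathbf{R})$ obeys region dominance: for every nonempty $X\subseteq[\mathsf N+1]$, the number of columns of $\mathbf{L}$ having a $1$ in every row indexed by $X$ is at most the number of columns of $\mathbf{R}$ having a $1$ in every row indexed by $X$, i.e. $\big|\bigwedge_{i\in X}\mathbf{L}_{(i)}\big|\le\big|\bigwedge_{i\in X}\mathbf{R}_{(i)}\big|$.
   Context: $\mathcal{P}_{\mathsf N}$ denotes the set of pairs $(\mathbf{L},\mathbf{R})$ of $(0,1)$-matrices, $\mathbf{L}$ of size $(\mathsf N+1)\times m_L$ and $\mathbf{R}$ of size $(\mathsf N+1)\times m_R$, such that some index $p\in[\mathsf N+1]$ (the purifier) has row $p$ of $\mathbf{L}$ and row $p$ of $\mathbf{R}$ both zero. $\mathbf{A}_{(i)}$ is the $i$-th row; $|v|=\sum_k|v_k|$; $\wedge$ is bitwise AND. The pair is balanced if $|\mathbf{L}_{(i)}|=|\mathbf{R}_{(i)}|$ for all $i\in[\mathsf N+1]$. Let $X_n\subseteq[\mathsf N+1]$ be the set of rows in which column $n$ of $\mathbf{L}$ has a $1$, and $Y_n$ likewise for $\mathbf{R}$. Min-cut function: let $G$ be a finite undirected graph with vertex set $\mathscr V$, nonnegative edge weights $w$, and $\mathsf N+1$ distinguished distinct (external) vertices labeled $1,\dots,\mathsf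 N+1$. For $X\subseteq[\mathsf N+1]$, $\mathsf S_G(X)=\min\{\sum_{e\in\mathscr C(V)}w(e): V\subseteq\mathscr V,\ V\cap\{\text{external vertices}\}=\text{the vertices labeled by }X\}$, where $\mathscr C(V)$ is the set of edges with exactly one endpoint in $V$. The inequality is a holographic entropy inequality (HEI) if $\sum_n\mathsf S_G(X_n)\ge\sum_n\mathsf S_G(Y_n)$ holds for every such weighted graph $G$. *)

theory Defs
  imports Complex_Main "HOL-Library.Uprod"
begin

text \<open>Vertices are natural numbers (every finite
graph is isomorphic to one on natural-number vertices).\<close>

definition wgraph :: "nat \<Rightarrow> nat set \<Rightarrow> nat uprod set \<Rightarrow> (nat uprod \<Rightarrow> real) \<Rightarrow> (nat \<Rightarrow> nat) \<Rightarrow> bool" where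
  "wgraph N VV E w ext \<longleftrightarrow> finite VV \<and> finite E \<and> (\<forall>e\<in>E. set_uprod e \<subseteq> VV)
     \<and> (\<forall>e\<in>E. 0 \<le> w e) \<and> inj_on ext {1..N+1} \<and> ext ` {1..N+1} \<subseteq> VV"

definition cut_edges :: "nat uprod set \<Rightarrow> nat set \<Rightarrow> nat uprod set" where
  "cut_edges E V = {e \<in> E. \<exists>a b. e = Upair a b \<and> a \<in> V \<and> b \<notin> V}"

definition cut_cost :: "nat uprod set \<Rightarrow> (nat uprod \<Rightarrow> real) \<Rightarrow> nat set \<Rightarrow> real" where
  "cut_cost E w V = (\<Sum>e\<in>cut_edges E V. w e)"

definition minS :: "nat \<Rightarrow> nat set \<Rightarrow> nat uprod set \<Rightarrow> (nat uprod \<Rightarrow> real) \<Rightarrow> (nat \<Rightarrow> nat) \<Rightarrow> nat set \<Rightarrow> real" where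
  "minS N VV E w ext X = Min {cut_cost E w V | V. V \<subseteq> VV \<and> V \<inter> ext ` {1..N+1} = ext ` X}"

text \<open>(0,1)-matrices are represented as boolean functions: M i k is the entry in row i
(i in 1..N+1) and column k (k in 1..m).\<close>

definition colset :: "nat \<Rightarrow> (nat \<Rightarrow> nat \<Rightarrow> bool) \<Rightarrow> nat \<Rightarrow> nat set" where
  "colset N M k = {i \<in> {1..N+1}. M i k}"

definition row_weight :: "(nat \<Rightarrow> nat \<Rightarrow> bool) \<Rightarrow> nat \<Rightarrow> nat \<Rightarrow> nat" where
  "row_weight M m i = card {k \<in> {1..m}. M i k}"

definition in_P :: "nat \<Rightarrow> nat \<Rightarrow> nat \<Rightarrow> (nat \<Rightarrow> nat \<Rightarrow> bool) \<Rightarrow> (nat \<Rightarrow> nat \<Rightarrow> bool) \<Rightarrow> bool" where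
  "in_P N mL mR L R \<longleftrightarrow> (\<exists>p\<in>{1..N+1}. (\<forall>k\<in>{1..mL}. \<not> L p k) \<and> (\<forall>k\<in>{1..mR}. \<not> R p k))"

definition balanced :: "nat \<Rightarrow> nat \<Rightarrow> nat \<Rightarrow> (nat \<Rightarrow> nat \<Rightarrow> bool) \<Rightarrow> (nat \<Rightarrow> nat \<Rightarrow> bool) \<Rightarrow> bool" where
  "balanced N mL mR L R \<longleftrightarrow> (\<forall>i\<in>{1..N+1}. row_weight L mL i = row_weight R mR i)"

definition is_HEI :: "nat \<Rightarrow> nat \<Rightarrow> nat \<Rightarrow> (nat \<Rightarrow> nat \<Rightarrow> bool) \<Rightarrow> (nat \<Rightarrow> nat \<Rightarrow> bool) \<Rightarrow> bool" where
  "is_HEI N mL mR L R \<longleftrightarrow> (\<forall>VV E w ext. wgraph N VV E w ext \<longrightarrow>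
      (\<Sum>n=1..mL. minS N VV E w ext (colset N L n)) \<ge> (\<Sum>n=1..mR. minS N VV E w ext (colset N R n)))"

definition and_weight :: "(nat \<Rightarrow> nat \<Rightarrow> bool) \<Rightarrow> nat \<Rightarrow> nat set \<Rightarrow> nat" where
  "and_weight M m X = card {k \<in> {1..m}. \<forall>i\<in>X. M i k}"

end

theory Submission
  imports Defs
begin

lemma card_sum_ind: "finite A \<Longrightarrow> real (card {x\<in>A. P x}) = (\<Sum>x\<in>A. if P x then 1 else 0)"
  by (simp add: sum.If_cases Int_def conj_commute)

lemma upair0_eq: "(Upair (0::nat) i = Upair 0 j) = (i = j)"
  by auto

locale star =
  fixes N p :: nat and X :: "nat set"
  assumes p: "p \<in> {1..N+1}" and X: "X \<subseteq> {1..N+1}" "X \<noteq> {}" "p \<notin> X"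
begin

definition "E = (\<lambda>i. Upair (0::nat) i) ` (insert p X)"
definition "w e = (if e = Upair 0 p then real (card X) - 1 else 1)"

lemma finX: "finite X" using X finite_subset by blast

lemma wg: "wgraph N {0..N+1} E w id"
proof -
  have "card X \<ge> 1" using finX X by (simp add: Suc_le_eq card_gt_0_iff)
  then show ?thesis using p X finX unfolding wgraph_def E_def w_def
    by auto
qed

lemma cut: "cut_edges E V = (\<lambda>i. Upair 0 i) ` {i \<in> insert p X. (0\<in>V) \<noteq> (i\<in>V)}"
proof -
  have nz: "0 \<notin> insert p X" using p X by auto
  show ?thesis unfolding cut_edges_def E_def
  proof (intro set_eqI iffI)
    fix e assume "e \<in> {e \<in> (\<lambda>i. Upair 0 i) ` (insert p X). \<exists>a b. e = Upair a b \<and> a \<in> V \<and> b \<notin> V}"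
    then obtain i a b where i: "i \<in> insert p X" "e = Upair 0 i" "e = Upair a b" "a \<in> V" "b \<notin> V" by blast
    then have "(a = 0 \<and> b = i) \<or> (a = i \<and> b = 0)" by auto
    then show "e \<in> (\<lambda>i. Upair 0 i) ` {i \<in> insert p X. (0\<in>V) \<noteq> (i\<in>V)}" using i by auto
  next
    fix e assume "e \<in> (\<lambda>i. Upair 0 i) ` {i \<in> insert p X. (0\<in>V) \<noteq> (i\<in>V)}"
    then obtain i where i: "i \<in> insert p X" "e = Upair 0 i" "(0\<in>V) \<noteq> (i\<in>V)" by blast
    then show "e \<in> {e \<in> (\<lambda>i. Upair 0 i) ` (insert p X). \<exists>a b. e = Upair a b \<and> a \<in> V \<and> b \<notin> V}"
    proof (cases "0 \<in> V")
      case True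
      then show ?thesis using i by blast
    next
      case False
      have "e = Upair i 0" using i by auto
      then show ?thesis using i False by blast
    qed
  qed
qed

lemma cost: "cut_cost E w V = (\<Sum>i\<in>{i \<in> insert p X. (0\<in>V) \<noteq> (i\<in>V)}. if i = p then real (card X) - 1 else 1)"
  unfolding cut_cost_def cut
  using p by (subst sum.reindex) (auto simp: inj_on_def upair0_eq w_def)

lemma minS_val:
  assumes Y: "Y \<subseteq> {1..N+1}" "p \<notin> Y"
  shows "minS N {0..N+1} E w id Y = real (card (Y \<inter> X)) - (if X \<subseteq> Y then 1 else 0)"
proof -
  have nz: "0 \<notin> Y" using Y by auto
  have S: "{V. V \<subseteq> {0..N+1} \<and> V \<inter> id ` {1..N+1} = id ` Y} = {Y, insert 0 Y}"
  proof (intro set_eqI iffI)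
    fix V assume "V \<in> {V. V \<subseteq> {0..N+1} \<and> V \<inter> id ` {1..N+1} = id ` Y}"
    then have V: "V \<subseteq> {0..N+1}" "V \<inter> {1..N+1} = Y" by auto
    show "V \<in> {Y, insert 0 Y}"
    proof (cases "0 \<in> V")
      case True
      have "V = insert 0 Y"
      proof (intro set_eqI iffI)
        fix x assume "x \<in> V" then show "x \<in> insert 0 Y" using V by (cases "x = 0") auto
      qed (use V True in auto)
      then show ?thesis by simp
    next
      case False
      have "V = Y"
      proof (intro set_eqI iffI)
        fix x assume "x \<in> V" then show "x \<in> Y" using V False by (cases "x = 0") auto
      qed (use V in auto)
      then show ?thesis by simp
    qed
  qed (use Y in auto)
  have c1: "cut_cost E w Y = real (card (Y \<inter> X))"
  proof -
    have "{i \<in> insert p X. (0\<in>Y) \<noteq> (i\<in>Y)} = Y \<inter> X" using nz Y by auto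
    moreover have "(\<Sum>i\<in>Y \<inter> X. if i = p then real (card X) - 1 else 1) = real (card (Y \<inter> X))"
    proof -
      have "(\<Sum>i\<in>Y \<inter> X. if i = p then real (card X) - 1 else 1) = (\<Sum>i\<in>Y \<inter> X. 1)"
        by (rule sum.cong) (use Y in auto)
      then show ?thesis by simp
    qed
    ultimately show ?thesis by (simp add: cost)
  qed
  have c2: "cut_cost E w (insert 0 Y) = real (card X) - 1 + real (card (X - Y))"
  proof -
    have "{i \<in> insert p X. (0\<in>insert 0 Y) \<noteq> (i\<in>insert 0 Y)} = insert p (X - Y)" using nz Y p X by auto
    moreover have "(\<Sum>i\<in>insert p (X - Y). if i = p then real (card X) - 1 else 1) = real (card X) - 1 + real (card (X - Y))"
    proof -
      have "(\<Sum>i\<in>X - Y. if i = p then real (card X) - 1 else 1) = (\<Sum>i\<in>X - Y. 1)"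
        by (rule sum.cong) (use X in auto)
      then show ?thesis using X finX by simp
    qed
    ultimately show ?thesis by (simp add: cost)
  qed
  have m: "minS N {0..N+1} E w id Y = min (real (card (Y \<inter> X))) (real (card X) - 1 + real (card (X - Y)))"
    unfolding minS_def
    apply (subst setcompr_eq_image)
    apply (subst S)
    using c1 c2 by (simp add: min_def)
  have cs: "card (Y \<inter> X) + card (X - Y) = card X"
    using finX by (metis Int_commute card_Int_Diff)
  have "card X \<ge> 1" using finX X by (simp add: Suc_le_eq card_gt_0_iff)
  moreover have "X \<subseteq> Y \<longleftrightarrow> card (X - Y) = 0" using finX by auto
  ultimately show ?thesis unfolding m using cs
    by (cases "X \<subseteq> Y") (auto simp: min_def)
qed

end

lemma sum_card_col:
  assumes "X \<subseteq> {1..N+1}" "finite X"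
  shows "(\<Sum>n=1..m. real (card (colset N M n \<inter> X))) = (\<Sum>i\<in>X. real (row_weight M m i))"
proof -
  have "(\<Sum>n=1..m. real (card (colset N M n \<inter> X))) = (\<Sum>n=1..m. \<Sum>i\<in>X. if M i n then 1 else 0)"
  proof (rule sum.cong)
    fix n
    have "colset N M n \<inter> X = {i\<in>X. M i n}" using assms unfolding colset_def by auto
    then show "real (card (colset N M n \<inter> X)) = (\<Sum>i\<in>X. if M i n then 1 else 0)"
      using card_sum_ind[OF assms(2)] by simp
  qed simp
  also have "\<dots> = (\<Sum>i\<in>X. \<Sum>n=1..m. if M i n then 1 else 0)" by (rule sum.swap)
  also have "\<dots> = (\<Sum>i\<in>X. real (row_weight M m i))"
    unfolding row_weight_def card_sum_ind[OF finite_atLeastAtMost] ..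
  finally show ?thesis .
qed

lemma sum_and:
  assumes "X \<subseteq> {1..N+1}"
  shows "(\<Sum>n=1..m. (if X \<subseteq> colset N M n then 1 else 0::real)) = real (and_weight M m X)"
proof -
  have "\<And>n. X \<subseteq> colset N M n \<longleftrightarrow> (\<forall>i\<in>X. M i n)" using assms unfolding colset_def by auto
  then show ?thesis unfolding and_weight_def card_sum_ind[OF finite_atLeastAtMost] by presburger
qed

lemma main_ineq:
  assumes p: "p \<in> {1..N+1}" and pL: "\<forall>k\<in>{1..mL}. \<not> L p k" and pR: "\<forall>k\<in>{1..mR}. \<not> R p k"
    and bal: "balanced N mL mR L R" and hei: "is_HEI N mL mR L R"
    and X: "X \<subseteq> {1..N+1}" "X \<noteq> {}" "p \<notin> X"
  shows "and_weight L mL X \<le> and_weight R mR X"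
proof -
  interpret star N p X using p X by unfold_locales auto
  have ineq: "(\<Sum>n=1..mL. minS N {0..N+1} E w id (colset N L n)) \<ge> (\<Sum>n=1..mR. minS N {0..N+1} E w id (colset N R n))"
    using hei wg unfolding is_HEI_def by blast
  have gen: "(\<Sum>n=1..m. minS N {0..N+1} E w id (colset N M n)) = (\<Sum>i\<in>X. real (row_weight M m i)) - real (and_weight M m X)"
    if pM: "\<forall>k\<in>{1..m}. \<not> M p k" for M m
  proof -
    have "(\<Sum>n=1..m. minS N {0..N+1} E w id (colset N M n)) = (\<Sum>n=1..m. real (card (colset N M n \<inter> X)) - (if X \<subseteq> colset N M n then 1 else 0))"
    proof (rule sum.cong)
      fix n assume "n \<in> {1..m}"
      then show "minS N {0..N+1} E w id (colset N M n) = real (card (colset N M n \<inter> X)) - (if X \<subseteq> colset N M n then 1 else 0)"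
        using pM by (intro minS_val) (auto simp: colset_def)
    qed simp
    also have "\<dots> = (\<Sum>i\<in>X. real (row_weight M m i)) - real (and_weight M m X)"
      unfolding sum_subtractf sum_card_col[OF X(1) finX] sum_and[OF X(1)] ..
    finally show ?thesis .
  qed
  have "(\<Sum>i\<in>X. real (row_weight L mL i)) = (\<Sum>i\<in>X. real (row_weight R mR i))"
    using bal X unfolding balanced_def by (intro sum.cong) auto
  then show ?thesis using ineq gen[of mL L, OF pL] gen[of mR R, OF pR] by simp
qed

theorem theorem5:
  fixes N mL mR :: nat and L R :: "nat \<Rightarrow> nat \<Rightarrow> bool"
  assumes "in_P N mL mR L R"
    and "balanced N mL mR L R"
    and "is_HEI N mL mR L R"
  shows "\<forall>X. X \<subseteq> {1..N+1} \<and> X \<noteq> {} \<longrightarrow> and_weight L mL X \<le> and_weight R mR X"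
proof (intro allI impI)
  fix X assume X: "X \<subseteq> {1..N+1} \<and> X \<noteq> {}"
  obtain p where p: "p \<in> {1..N+1}" "\<forall>k\<in>{1..mL}. \<not> L p k" "\<forall>k\<in>{1..mR}. \<not> R p k"
    using assms(1) unfolding in_P_def by blast
  show "and_weight L mL X \<le> and_weight R mR X"
  proof (cases "p \<in> X")
    case True
    then have e: "{k \<in> {1..mL}. \<forall>i\<in>X. L i k} = {}" using p by auto
    have "and_weight L mL X = 0" unfolding and_weight_def e by simp
    then show ?thesis by simp
  next
    case False
    then show ?thesis using main_ineq[OF p assms(2,3)] X by blast
  qed
qed

end
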